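(* For every $n\ge 5$, the sensitivity to synchronism of elementary cellular automaton rule $8$ satisfies $\mu(f_{8,n})=\dfrac{\phi^{2n}+\phi^{-2n}-2^n}{3^n-2^{n+1}+2}$, where $\phi=\frac{1+\sqrt5}{2}$ is the golden ratio.
   Context: Cells are indexed by $\mathbb{Z}_n=\{0,\dots,n-1\}$, indices modulo $n$. Rule $8$ has local rule $r_8(x_1,x_2,x_3)=\neg x_1\wedge x_2\wedge x_3$ and global function $f_{8,n}(x)_i=r_8(x_{i-1},x_i,x_{i+1})$. An update schedule is an ordered partition $\Delta=(\Delta_1,\dots,\Delta_k)$ of $\mathbb{Z}_n$ into nonempty blocks; $\mathcal{P}_n$ is the set of them. For a block $B$ let $f^{(B)}(x)_i=f_{8,n}(x)_i$ if $i\in B$ and $x_i$ otherwise; $f^{(\Delta)}_{8,n}=f^{(\Delta_k)}\circ\cdots\circ f^{(\Delta_1)}$. The dynamics of $\Delta$ is the transition digraph with arcs $(x,f^{(\Delta)}_{8,n}(x))$; $\mathcal{D}(f_{8,n})$ is the set of distinct dynamics over $\Delta\in\mathcal{P}_n$. The sensitivity to synchronism is $\mu(f_{8,n})=|\mathcal{D}(f_{8,n})|/(3^n-2^{n+1}+2)$. *)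

theory Defs
  imports Complex_Main
begin

text \<open>Configurations of size n: functions nat => bool, identified with {0,1}^n
  by requiring all cells at positions >= n to be False.\<close>
definition configs :: "nat \<Rightarrow> (nat \<Rightarrow> bool) set" where
  "configs n = {x. \<forall>i\<ge>n. \<not> x i}"

definition r8 :: "bool \<Rightarrow> bool \<Rightarrow> bool \<Rightarrow> bool" where
  "r8 x1 x2 x3 = (\<not> x1 \<and> x2 \<and> x3)"

definition f8 :: "nat \<Rightarrow> (nat \<Rightarrow> bool) \<Rightarrow> (nat \<Rightarrow> bool)" where
  "f8 n x = (\<lambda>i. if i < n then r8 (x ((i + n - 1) mod n)) (x i) (x ((i + 1) mod n)) else False)"

definition block_update :: "nat \<Rightarrow> nat set \<Rightarrow> (nat \<Rightarrow> bool) \<Rightarrow> (nat \<Rightarrow> bool)" where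
  "block_update n B x = (\<lambda>i. if i \<in> B then f8 n x i else x i)"

definition schedules :: "nat \<Rightarrow> nat set list set" where
  "schedules n = {\<Delta>. (\<forall>B\<in>set \<Delta>. B \<noteq> {}) \<and>
      (\<forall>i j. i < length \<Delta> \<longrightarrow> j < length \<Delta> \<longrightarrow> i \<noteq> j \<longrightarrow> \<Delta> ! i \<inter> \<Delta> ! j = {}) \<and>
      \<Union>(set \<Delta>) = {0..<n}}"

text \<open>f^(Delta) = f^(Delta_k) o ... o f^(Delta_1): Delta_1 applied first.\<close>
definition sched_update :: "nat \<Rightarrow> nat set list \<Rightarrow> (nat \<Rightarrow> bool) \<Rightarrow> (nat \<Rightarrow> bool)" where
  "sched_update n \<Delta> x = fold (block_update n) \<Delta> x"

definition dynamics :: "nat \<Rightarrow> nat set list \<Rightarrow> ((nat \<Rightarrow> bool) \<times> (nat \<Rightarrow> bool)) set" where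
  "dynamics n \<Delta> = {(x, sched_update n \<Delta> x) | x. x \<in> configs n}"

definition dyn_set :: "nat \<Rightarrow> ((nat \<Rightarrow> bool) \<times> (nat \<Rightarrow> bool)) set set" where
  "dyn_set n = dynamics n ` schedules n"

definition sensitivity :: "nat \<Rightarrow> real" where
  "sensitivity n = real (card (dyn_set n)) / (3 ^ n - 2 ^ (n + 1) + 2)"

definition golden :: real where
  "golden = (1 + sqrt 5) / 2"

end

theory Submission
  imports Defs
begin


definition pr :: "nat \<Rightarrow> nat \<Rightarrow> nat" where "pr n j = (j + n - 1) mod n"
definition sc :: "nat \<Rightarrow> nat \<Rightarrow> nat" where "sc n j = (j + 1) mod n"

lemma pr_alt: "j < n \<Longrightarrow> pr n j = (if j = 0 then n - 1 else j - 1)"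
  unfolding pr_def
  by (cases "j = 0") (auto simp: mod_if)

lemma sc_alt: "j < n \<Longrightarrow> sc n j = (if j = n - 1 then 0 else j + 1)"
  unfolding sc_def by (auto simp: mod_if)

lemma pr_lt: "j < n \<Longrightarrow> pr n j < n" by (auto simp add: pr_alt)
lemma sc_lt: "j < n \<Longrightarrow> sc n j < n" by (auto simp add: sc_alt)
lemma sc_pr: "j < n \<Longrightarrow> sc n (pr n j) = j" by (auto simp: pr_alt sc_alt)
lemma pr_sc: "j < n \<Longrightarrow> pr n (sc n j) = j" by (auto simp: pr_alt sc_alt)

fun Aux :: "nat \<Rightarrow> (nat \<Rightarrow> nat) \<Rightarrow> (nat \<Rightarrow> bool) \<Rightarrow> nat \<Rightarrow> nat \<Rightarrow> bool" where
  "Aux n t x 0 j = x (pr n j)"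
| "Aux n t x (Suc k) j = (x (pr n j) \<and> (t (pr n j) < t j \<longrightarrow> \<not> Aux n t x k (pr n j)))"

definition AA :: "nat \<Rightarrow> (nat \<Rightarrow> nat) \<Rightarrow> (nat \<Rightarrow> bool) \<Rightarrow> nat \<Rightarrow> bool" where
  "AA n t x j = Aux n t x (t j) j"

definition YY :: "nat \<Rightarrow> (nat \<Rightarrow> nat) \<Rightarrow> (nat \<Rightarrow> bool) \<Rightarrow> nat \<Rightarrow> bool" where
  "YY n t x = (\<lambda>j. j < n \<and> x j \<and> \<not> t (sc n j) < t j \<and> x (sc n j) \<and> \<not> AA n t x j)"

lemma Aux_stab: "t j \<le> k \<Longrightarrow> t j \<le> k' \<Longrightarrow> Aux n t x k j = Aux n t x k' j"
proof (induction k arbitrary: k' j)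
  case 0
  then show ?case by (cases k') auto
next
  case (Suc k)
  show ?case
  proof (cases k')
    case 0
    then show ?thesis using Suc by auto
  next
    case (Suc m)
    have "t (pr n j) < t j \<Longrightarrow> Aux n t x k (pr n j) = Aux n t x m (pr n j)"
      using Suc.IH[of "pr n j" m] Suc.prems Suc by auto
    then show ?thesis using Suc by auto
  qed
qed

lemma AA_rec: "AA n t x j = (x (pr n j) \<and> (t (pr n j) < t j \<longrightarrow> \<not> AA n t x (pr n j)))"
proof (cases "t j")
  case 0
  then show ?thesis by (simp add: AA_def)
next
  case (Suc k)
  have "t (pr n j) < t j \<Longrightarrow> Aux n t x k (pr n j) = Aux n t x (t (pr n j)) (pr n j)"
    using Aux_stab[of t "pr n j" k "t (pr n j)"] Suc by auto
  then show ?thesis using Suc by (auto simp: AA_def)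
qed

lemma YY_local:
  assumes "j < n"
  shows "YY n t x j = r8 (if t (pr n j) < t j then YY n t x (pr n j) else x (pr n j)) (x j)
            (if t (sc n j) < t j then YY n t x (sc n j) else x (sc n j))"
proof -
  have p: "pr n j < n" "sc n (pr n j) = j" using assms by (simp_all add: pr_lt sc_pr)
  have s: "sc n j < n" "pr n (sc n j) = j" using assms by (simp_all add: sc_lt pr_sc)
  have a1: "AA n t x j = (x (pr n j) \<and> (t (pr n j) < t j \<longrightarrow> \<not> AA n t x (pr n j)))"
    by (rule AA_rec)
  have a2: "AA n t x (sc n j) = (x j \<and> (t j < t (sc n j) \<longrightarrow> \<not> AA n t x j))"
    using AA_rec[of n t x "sc n j"] s by simp
  show ?thesis
    unfolding YY_def r8_def using assms p s a1 a2 by auto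
qed

lemma fold_sem:
  assumes x: "x \<in> configs n"
  shows "sorted_wrt (<) ks \<Longrightarrow> (\<forall>k\<in>set ks. m \<le> k) \<Longrightarrow> (\<forall>i<n. t i < m \<or> t i \<in> set ks)
    \<Longrightarrow> (\<forall>j. z j = (if j < n \<and> t j < m then YY n t x j else x j))
    \<Longrightarrow> fold (block_update n) (map (\<lambda>k. {i. i < n \<and> t i = k}) ks) z = YY n t x"
proof (induction ks arbitrary: m z)
  case Nil
  have "z j = YY n t x j" for j
    using Nil x by (cases "j < n") (auto simp: configs_def YY_def)
  then show ?case by auto
next
  case (Cons k ks)
  define z' where "z' = block_update n {i. i < n \<and> t i = k} z"
  have gt: "\<forall>k'\<in>set ks. k < k'" using Cons.prems(1) by simp
  have km: "m \<le> k" using Cons.prems(2) by simp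
  have cov: "\<And>i. i < n \<Longrightarrow> t i < m \<or> t i = k \<or> t i \<in> set ks" using Cons.prems(3) by auto
  have z'_eq: "\<forall>j. z' j = (if j < n \<and> t j < Suc k then YY n t x j else x j)"
  proof
    fix j
    show "z' j = (if j < n \<and> t j < Suc k then YY n t x j else x j)"
    proof (cases "j < n \<and> t j = k")
      case True
      have pj: "pr n j < n" "sc n j < n" using True by (simp_all add: pr_lt sc_lt)
      have e1: "(t (pr n j) < m) = (t (pr n j) < t j)"
        using cov[OF pj(1)] gt km True by auto
      have e2: "(t (sc n j) < m) = (t (sc n j) < t j)"
        using cov[OF pj(2)] gt km True by auto
      have "z' j = f8 n z j" using True by (simp add: z'_def block_update_def)
      also have "\<dots> = r8 (z (pr n j)) (z j) (z (sc n j))"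
        using True by (simp add: f8_def pr_def sc_def)
      also have "\<dots> = YY n t x j"
        using YY_local[of j n t x] True Cons.prems(4) pj e1 e2 km by simp
      finally show ?thesis using True by simp
    next
      case False
      have "z' j = z j" using False by (auto simp: z'_def block_update_def)
      moreover have "(j < n \<and> t j < Suc k) = (j < n \<and> t j < m)"
      proof
        assume "j < n \<and> t j < Suc k"
        then show "j < n \<and> t j < m" using False cov[of j] gt km by fastforce
      qed (use km in auto)
      ultimately show ?thesis using Cons.prems(4) by simp
    qed
  qed
  have "fold (block_update n) (map (\<lambda>k. {i. i < n \<and> t i = k}) ks) z' = YY n t x"
    apply (rule Cons.IH[of "Suc k"])
    using Cons.prems(1) gt z'_eq km apply auto
    using cov by fastforce
  then show ?case by (simp add: z'_def)
qed

lemma sched_sem: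
  assumes "x \<in> configs n" "sorted_wrt (<) ks" "\<forall>i<n. t i \<in> set ks"
  shows "sched_update n (map (\<lambda>k. {i. i < n \<and> t i = k}) ks) x = YY n t x"
  unfolding sched_update_def
  by (rule fold_sem[OF assms(1,2), of 0]) (use assms(3) in auto)



definition DD :: "nat \<Rightarrow> (nat \<Rightarrow> nat) \<Rightarrow> ((nat \<Rightarrow> bool) \<times> (nat \<Rightarrow> bool)) set" where
  "DD n t = {(x, YY n t x) | x. x \<in> configs n}"

lemma schedule_repr:
  assumes "\<Delta> \<in> schedules n"
  shows "\<exists>t. \<Delta> = map (\<lambda>k. {i. i < n \<and> t i = k}) [0..<length \<Delta>] \<and> (\<forall>i<n. t i < length \<Delta>)"
proof -
  have ne: "\<forall>B\<in>set \<Delta>. B \<noteq> {}"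
    and dj: "\<And>i j. i < length \<Delta> \<Longrightarrow> j < length \<Delta> \<Longrightarrow> i \<noteq> j \<Longrightarrow> \<Delta> ! i \<inter> \<Delta> ! j = {}"
    and un: "\<Union>(set \<Delta>) = {0..<n}"
    using assms unfolding schedules_def by auto
  define t where "t i = (SOME k. k < length \<Delta> \<and> i \<in> \<Delta> ! k)" for i
  have ex: "\<exists>k. k < length \<Delta> \<and> i \<in> \<Delta> ! k" if "i < n" for i
  proof -
    have "i \<in> \<Union>(set \<Delta>)" using un that by auto
    then obtain B where "B \<in> set \<Delta>" "i \<in> B" by auto
    then show ?thesis by (metis in_set_conv_nth)
  qed
  have tp: "t i < length \<Delta> \<and> i \<in> \<Delta> ! t i" if "i < n" for i
    unfolding t_def by (rule someI_ex[OF ex[OF that]])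
  have blk: "\<Delta> ! k = {i. i < n \<and> t i = k}" if "k < length \<Delta>" for k
  proof
    show "\<Delta> ! k \<subseteq> {i. i < n \<and> t i = k}"
    proof
      fix i assume i: "i \<in> \<Delta> ! k"
      have "i \<in> \<Union>(set \<Delta>)" using i that by auto
      then have "i < n" using un by auto
      moreover have "t i = k"
      proof (rule ccontr)
        assume "t i \<noteq> k"
        then have "\<Delta> ! t i \<inter> \<Delta> ! k = {}" using dj tp[OF \<open>i < n\<close>] that by auto
        then show False using tp[OF \<open>i < n\<close>] i by auto
      qed
      ultimately show "i \<in> {i. i < n \<and> t i = k}" by simp
    qed
  next
    show "{i. i < n \<and> t i = k} \<subseteq> \<Delta> ! k" using tp by auto
  qed
  have "\<Delta> = map (\<lambda>k. {i. i < n \<and> t i = k}) [0..<length \<Delta>]"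
    by (rule nth_equalityI) (auto simp: blk)
  then show ?thesis using tp by blast
qed

lemma schedule_of_t:
  "\<exists>\<Delta>\<in>schedules n. \<Delta> = map (\<lambda>k. {i. i < n \<and> t i = k}) (sorted_list_of_set (t ` {..<n}))"
proof -
  define ks where "ks = sorted_list_of_set (t ` {..<n})"
  define \<Delta> where "\<Delta> = map (\<lambda>k. {i. i < n \<and> t i = k}) ks"
  have sk: "set ks = t ` {..<n}" unfolding ks_def by simp
  have dk: "distinct ks" unfolding ks_def by simp
  have "\<Delta> \<in> schedules n"
    unfolding schedules_def
  proof (intro CollectI conjI allI impI)
    show "\<forall>B\<in>set \<Delta>. B \<noteq> {}" unfolding \<Delta>_def using sk by auto
  next
    fix i j assume "i < length \<Delta>" "j < length \<Delta>" "i \<noteq> j"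
    then have "ks ! i \<noteq> ks ! j" using dk by (simp add: \<Delta>_def nth_eq_iff_index_eq)
    then show "\<Delta> ! i \<inter> \<Delta> ! j = {}" using \<open>i < length \<Delta>\<close> \<open>j < length \<Delta>\<close>
      by (auto simp: \<Delta>_def)
  next
    show "\<Union>(set \<Delta>) = {0..<n}" unfolding \<Delta>_def using sk by auto
  qed
  then show ?thesis unfolding \<Delta>_def ks_def by blast
qed

lemma dyn_set_eq: "dyn_set n = range (DD n)"
proof
  show "dyn_set n \<subseteq> range (DD n)"
  proof
    fix D assume "D \<in> dyn_set n"
    then obtain \<Delta> where d: "\<Delta> \<in> schedules n" "D = dynamics n \<Delta>" by (auto simp: dyn_set_def)
    obtain t where t: "\<Delta> = map (\<lambda>k. {i. i < n \<and> t i = k}) [0..<length \<Delta>]" "\<forall>i<n. t i < length \<Delta>"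
      using schedule_repr[OF d(1)] by blast
    have "sched_update n \<Delta> x = YY n t x" if "x \<in> configs n" for x
      apply (subst t(1)) apply (rule sched_sem) using that t(2) by auto
    then have "D = DD n t" unfolding d(2) dynamics_def DD_def by auto
    then show "D \<in> range (DD n)" by simp
  qed
next
  show "range (DD n) \<subseteq> dyn_set n"
  proof
    fix D assume "D \<in> range (DD n)"
    then obtain t where D: "D = DD n t" by auto
    obtain \<Delta> where d: "\<Delta> \<in> schedules n"
      "\<Delta> = map (\<lambda>k. {i. i < n \<and> t i = k}) (sorted_list_of_set (t ` {..<n}))"
      using schedule_of_t by blast
    have "sched_update n \<Delta> x = YY n t x" if "x \<in> configs n" for x
      apply (subst d(2)) apply (rule sched_sem) using that by auto
    then have "D = dynamics n \<Delta>" unfolding D dynamics_def DD_def by auto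
    then show "D \<in> dyn_set n" using d(1) by (auto simp: dyn_set_def)
  qed
qed



definition kap :: "nat \<Rightarrow> (nat \<Rightarrow> nat) \<Rightarrow> (bool \<times> bool) list" where
  "kap n t = map (\<lambda>j. (t (sc n j) < t j, t (pr n j) < t j \<and> \<not> t (sc n j) < t j)) [0..<n]"

lemma AA_eq:
  assumes "\<forall>j<n. (t1 (sc n j) < t1 j) = (t2 (sc n j) < t2 j)"
    and "\<forall>j<n. \<not> t1 (sc n j) < t1 j \<longrightarrow> (t1 (pr n j) < t1 j) = (t2 (pr n j) < t2 j)"
  shows "j < n \<Longrightarrow> \<not> t1 (sc n j) < t1 j \<Longrightarrow> AA n t1 x j = AA n t2 x j"
proof (induction "t1 j" arbitrary: j rule: less_induct)
  case less
  have P: "(t1 (pr n j) < t1 j) = (t2 (pr n j) < t2 j)" using assms(2) less.prems by auto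
  have "AA n t1 x (pr n j) = AA n t2 x (pr n j)" if "t1 (pr n j) < t1 j"
  proof -
    have "\<not> t1 (sc n (pr n j)) < t1 (pr n j)" using that less.prems by (simp add: sc_pr)
    then show ?thesis using less.hyps[OF that] less.prems by (simp add: pr_lt)
  qed
  then show ?case using P AA_rec[of n t1 x j] AA_rec[of n t2 x j] by auto
qed

lemma kap_eq_imp:
  assumes "kap n t1 = kap n t2" "x \<in> configs n"
  shows "YY n t1 x = YY n t2 x"
proof -
  have e: "\<forall>j<n. (t1 (sc n j) < t1 j) = (t2 (sc n j) < t2 j) \<and>
      (t1 (pr n j) < t1 j \<and> \<not> t1 (sc n j) < t1 j) = (t2 (pr n j) < t2 j \<and> \<not> t2 (sc n j) < t2 j)"
  proof (intro allI impI)
    fix j assume "j < n"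
    have "kap n t1 ! j = kap n t2 ! j" using assms by simp
    then show "(t1 (sc n j) < t1 j) = (t2 (sc n j) < t2 j) \<and>
      (t1 (pr n j) < t1 j \<and> \<not> t1 (sc n j) < t1 j) = (t2 (pr n j) < t2 j \<and> \<not> t2 (sc n j) < t2 j)"
      using \<open>j < n\<close> by (simp add: kap_def) blast
  qed
  have a: "\<And>j. j < n \<Longrightarrow> \<not> t1 (sc n j) < t1 j \<Longrightarrow> AA n t1 x j = AA n t2 x j"
    by (rule AA_eq) (use e in auto)
  show ?thesis
  proof
    fix j show "YY n t1 x j = YY n t2 x j"
      using a[of j] e by (auto simp: YY_def)
  qed
qed

lemma arith5:
  fixes a b c d :: nat
  assumes "j < n" "5 \<le> n" "a = (if j = 0 then n - 1 else j - 1)"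
    "b = (if a = 0 then n - 1 else a - 1)" "c = (if b = 0 then n - 1 else b - 1)"
    "d = (if j = n - 1 then 0 else j + 1)"
  shows "c \<noteq> b \<and> c \<noteq> a \<and> c \<noteq> j \<and> c \<noteq> d \<and> a \<noteq> j \<and> a \<noteq> d"
proof -
  consider "j = 0" | "j = 1" | "j = 2" | "3 \<le> j" by linarith
  then show ?thesis
  proof cases
    case 1 then show ?thesis using assms by (simp; arith)
  next
    case 2 then show ?thesis using assms by (simp; arith)
  next
    case 3 then show ?thesis using assms by (simp; arith)
  next
    case 4
    then have "a = j - 1" "b = j - 2" "c = j - 3" using assms by auto
    then show ?thesis using assms 4 by auto
  qed
qed

lemma dist5:
  assumes "j < n" "5 \<le> n"
  shows "pr n (pr n (pr n j)) \<noteq> pr n (pr n j)" "pr n (pr n (pr n j)) \<noteq> pr n j"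
    "pr n (pr n (pr n j)) \<noteq> j" "pr n (pr n (pr n j)) \<noteq> sc n j"
    "pr n j \<noteq> j" "pr n j \<noteq> sc n j"
proof -
  have p1: "pr n j = (if j = 0 then n - 1 else j - 1)" using assms by (simp add: pr_alt)
  have l1: "pr n j < n" using assms by (simp add: pr_lt)
  have p2: "pr n (pr n j) = (if pr n j = 0 then n - 1 else pr n j - 1)" using l1 by (simp add: pr_alt)
  have l2: "pr n (pr n j) < n" using l1 by (simp add: pr_lt)
  have p3: "pr n (pr n (pr n j)) = (if pr n (pr n j) = 0 then n - 1 else pr n (pr n j) - 1)"
    using l2 by (simp add: pr_alt)
  have s1: "sc n j = (if j = n - 1 then 0 else j + 1)" using assms by (simp add: sc_alt)
  show "pr n (pr n (pr n j)) \<noteq> pr n (pr n j)" "pr n (pr n (pr n j)) \<noteq> pr n j"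
    "pr n (pr n (pr n j)) \<noteq> j" "pr n (pr n (pr n j)) \<noteq> sc n j"
    "pr n j \<noteq> j" "pr n j \<noteq> sc n j"
    using arith5[OF assms(1) assms(2) p1 p2 p3 s1] by auto
qed

lemma sep_Q:
  assumes "j < n" "5 \<le> n" "t1 (sc n j) < t1 j" "\<not> t2 (sc n j) < t2 j"
  shows "\<exists>x\<in>configs n. YY n t1 x \<noteq> YY n t2 x"
proof -
  define x where "x = (\<lambda>i. i = j \<or> i = sc n j)"
  have c: "x \<in> configs n" using assms(1) sc_lt[OF assms(1)] by (auto simp: x_def configs_def)
  have "\<not> x (pr n j)" using dist5[OF assms(1,2)] by (auto simp: x_def)
  then have "\<not> AA n t2 x j" using AA_rec[of n t2 x j] by simp
  then have "YY n t2 x j" using assms by (simp add: YY_def x_def)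
  moreover have "\<not> YY n t1 x j" using assms by (simp add: YY_def)
  ultimately show ?thesis using c by metis
qed

lemma YY_probe:
  assumes "j < n" "5 \<le> n" "\<not> t (sc n j) < t j"
  shows "YY n t (\<lambda>i. i = pr n (pr n j) \<or> i = pr n j \<or> i = j \<or> i = sc n j) j = (t (pr n j) < t j)"
proof -
  define x where "x = (\<lambda>i. i = pr n (pr n j) \<or> i = pr n j \<or> i = j \<or> i = sc n j)"
  note d = dist5[OF assms(1,2)]
  have a3: "\<not> AA n t x (pr n (pr n j))"
    using AA_rec[of n t x "pr n (pr n j)"] d by (auto simp: x_def)
  have a2: "AA n t x (pr n j)"
    using AA_rec[of n t x "pr n j"] a3 by (auto simp: x_def)
  have a1: "AA n t x j = (\<not> t (pr n j) < t j)"
    using AA_rec[of n t x j] a2 by (auto simp: x_def)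
  have xj: "x j" "x (sc n j)" by (simp_all add: x_def)
  have "YY n t x j = (t (pr n j) < t j)"
    unfolding YY_def using assms(1,3) xj a1 by simp
  then show ?thesis unfolding x_def .
qed

lemma sep_P:
  assumes "j < n" "5 \<le> n" "\<not> t1 (sc n j) < t1 j" "\<not> t2 (sc n j) < t2 j"
    "(t1 (pr n j) < t1 j) \<noteq> (t2 (pr n j) < t2 j)"
  shows "\<exists>x\<in>configs n. YY n t1 x \<noteq> YY n t2 x"
proof -
  define x where "x = (\<lambda>i. i = pr n (pr n j) \<or> i = pr n j \<or> i = j \<or> i = sc n j)"
  have c: "x \<in> configs n" using assms(1) sc_lt[OF assms(1)] pr_lt[OF assms(1)]
      pr_lt[OF pr_lt[OF assms(1)]] by (auto simp: x_def configs_def)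
  have y1: "YY n t1 x j = (t1 (pr n j) < t1 j)" unfolding x_def by (rule YY_probe[OF assms(1,2,3)])
  have y2: "YY n t2 x j = (t2 (pr n j) < t2 j)" unfolding x_def by (rule YY_probe[OF assms(1,2,4)])
  have "YY n t1 x j \<noteq> YY n t2 x j" unfolding y1 y2 by (rule assms(5))
  then show ?thesis using c by metis
qed

lemma DD_eq_iff:
  assumes "5 \<le> n"
  shows "DD n t1 = DD n t2 \<longleftrightarrow> kap n t1 = kap n t2"
proof
  assume k: "kap n t1 = kap n t2"
  show "DD n t1 = DD n t2" unfolding DD_def using kap_eq_imp[OF k] by auto
next
  assume D: "DD n t1 = DD n t2"
  have Y: "YY n t1 x = YY n t2 x" if "x \<in> configs n" for x
  proof -
    have "(x, YY n t1 x) \<in> DD n t2" using D that by (auto simp: DD_def)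
    then show ?thesis by (auto simp: DD_def)
  qed
  show "kap n t1 = kap n t2"
  proof (rule ccontr)
    assume "kap n t1 \<noteq> kap n t2"
    have "\<exists>j<n. kap n t1 ! j \<noteq> kap n t2 ! j"
    proof (rule ccontr)
      assume "\<not> (\<exists>j<n. kap n t1 ! j \<noteq> kap n t2 ! j)"
      then have "kap n t1 = kap n t2" by (intro nth_equalityI) (auto simp: kap_def)
      then show False using \<open>kap n t1 \<noteq> kap n t2\<close> by simp
    qed
    then obtain j where j: "j < n" "kap n t1 ! j \<noteq> kap n t2 ! j" by blast
    then have ne: "(t1 (sc n j) < t1 j, t1 (pr n j) < t1 j \<and> \<not> t1 (sc n j) < t1 j) \<noteq>
        (t2 (sc n j) < t2 j, t2 (pr n j) < t2 j \<and> \<not> t2 (sc n j) < t2 j)"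
      by (simp add: kap_def)
    show False
    proof (cases "(t1 (sc n j) < t1 j) = (t2 (sc n j) < t2 j)")
      case True
      then have "\<not> t1 (sc n j) < t1 j" "\<not> t2 (sc n j) < t2 j"
        "(t1 (pr n j) < t1 j) \<noteq> (t2 (pr n j) < t2 j)" using ne by auto
      then show False using sep_P[OF j(1) assms] Y by blast
    next
      case False
      then show False
        using sep_Q[OF j(1) assms, of t1 t2] sep_Q[OF j(1) assms, of t2 t1] Y by metis
    qed
  qed
qed



definition Sg :: "(bool \<times> bool) set" where "Sg = {(True,False),(False,True),(False,False)}"

definition KK :: "nat \<Rightarrow> (bool \<times> bool) list set" where
  "KK n = {c. length c = n \<and> set c \<subseteq> Sg \<and> (\<forall>j<n. \<not> (fst (c!j) \<and> snd (c!(sc n j))))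
     \<and> c \<noteq> replicate n (True,False) \<and> ((True,False) \<notin> set c \<longrightarrow> (False,True) \<notin> set c)}"

lemma chain_le:
  fixes t :: "nat \<Rightarrow> nat"
  assumes "\<forall>j<n. t j \<le> t (sc n j)"
  shows "i \<le> k \<Longrightarrow> k < n \<Longrightarrow> t i \<le> t k"
proof (induction k rule: dec_induct)
  case base then show ?case by simp
next
  case (step k)
  have "sc n k = Suc k" using step by (simp add: sc_alt)
  then have "t k \<le> t (Suc k)" using assms step by (metis Suc_lessD)
  then show ?case using step by simp
qed

lemma kap_in:
  assumes "1 \<le> n"
  shows "kap n t \<in> KK n"
proof -
  have len: "length (kap n t) = n" by (simp add: kap_def)
  have nth: "kap n t ! j = (t (sc n j) < t j, t (pr n j) < t j \<and> \<not> t (sc n j) < t j)" if "j < n" for j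
    using that by (simp add: kap_def)
  have sg: "set (kap n t) \<subseteq> Sg" by (auto simp: kap_def Sg_def)
  have cyc: "\<forall>j<n. \<not> (fst (kap n t ! j) \<and> snd (kap n t ! (sc n j)))"
  proof (intro allI impI)
    fix j assume j: "j < n"
    show "\<not> (fst (kap n t ! j) \<and> snd (kap n t ! (sc n j)))"
      using nth[OF j] nth[OF sc_lt[OF j]] pr_sc[OF j] by auto
  qed
  obtain j0 where j0: "j0 < n" "\<forall>j<n. t j0 \<le> t j"
  proof -
    have "finite (t ` {..<n})" "t ` {..<n} \<noteq> {}" using assms by (auto simp: lessThan_empty_iff)
    then have "Min (t ` {..<n}) \<in> t ` {..<n}" by (rule Min_in)
    then obtain j0 where "j0 < n" "t j0 = Min (t ` {..<n})" by auto
    then show ?thesis using that by auto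
  qed
  have nrep: "kap n t \<noteq> replicate n (True,False)"
  proof
    assume "kap n t = replicate n (True,False)"
    then have "kap n t ! j0 = (True, False)" using j0 by simp
    then have "t (sc n j0) < t j0" using nth[OF j0(1)] by simp
    then show False using j0 sc_lt[OF j0(1)] by force
  qed
  have noF: "(False,True) \<notin> set (kap n t)" if "(True,False) \<notin> set (kap n t)"
  proof -
    have le: "\<forall>j<n. t j \<le> t (sc n j)"
    proof (intro allI impI)
      fix j assume j: "j < n"
      have "kap n t ! j \<in> set (kap n t)" using j len by simp
      then have "kap n t ! j \<noteq> (True,False)" using that by metis
      then show "t j \<le> t (sc n j)" using nth[OF j] by auto
    qed
    have last: "t (n - 1) \<le> t 0"
      using le[rule_format, of "n - 1"] assms by (simp add: sc_alt)
    have eq: "t i = t 0" if "i < n" for i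
    proof -
      have "i \<le> n - 1" using that by simp
      then show ?thesis
        using chain_le[OF le, of 0 i] chain_le[OF le, of i "n - 1"] last that by linarith
    qed
    show ?thesis
    proof
      assume "(False,True) \<in> set (kap n t)"
      then obtain j where j: "j < n" "kap n t ! j = (False,True)" by (metis in_set_conv_nth len)
      then show False using nth[OF j(1)] eq[OF j(1)] eq[OF pr_lt[OF j(1)]] by simp
    qed
  qed
  show ?thesis unfolding KK_def using len sg cyc nrep noF by blast
qed



lemma tw_less: "\<exists>y\<in>set ys. \<not> P y \<Longrightarrow> length (takeWhile P ys) < length ys"
  by (induction ys) auto

lemma tw_app_le: "length (takeWhile P (xs @ ys)) \<le> length xs + length (takeWhile P ys)"
  by (induction xs) auto

lemma Sg_cases: "l \<in> Sg \<Longrightarrow> l = (l = (True,False), l = (False,True))"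
  by (auto simp: Sg_def)

lemma kap_surj:
  assumes n: "1 \<le> n" and c: "c \<in> KK n"
  shows "\<exists>t. kap n t = c"
proof -
  let ?F = "(True,False)" and ?B = "(False,True)"
  have len: "length c = n" and sg: "set c \<subseteq> Sg"
    and cyc: "\<And>j. j < n \<Longrightarrow> \<not> (fst (c!j) \<and> snd (c!(sc n j)))"
    and nrep: "c \<noteq> replicate n ?F" and nob: "?F \<notin> set c \<Longrightarrow> ?B \<notin> set c"
    using c unfolding KK_def by auto
  have cj: "c ! j = (c ! j = ?F, c ! j = ?B)" if "j < n" for j
    using Sg_cases[of "c ! j"] sg that len by (meson nth_mem subsetD)
  show ?thesis
  proof (cases "?F \<in> set c")
    case False
    then have nb: "?B \<notin> set c" using nob by blast
    have allE: "c ! j = (False,False)" if "j < n" for j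
    proof -
      have "c ! j \<in> set c" using that len by simp
      then have "c ! j \<noteq> ?F" "c ! j \<noteq> ?B" using False nb by metis+
      then show ?thesis using cj[OF that] by (metis (full_types))
    qed
    have "kap n (\<lambda>_. 0) = c"
      by (rule nth_equalityI) (auto simp: kap_def len allE)
    then show ?thesis by blast
  next
    case True
    have nF: "\<exists>l\<in>set c. l \<noteq> ?F"
    proof (rule ccontr)
      assume "\<not> (\<exists>l\<in>set c. l \<noteq> ?F)"
      then have "replicate (length c) ?F = c" by (intro replicate_length_same) auto
      then show False using nrep len by simp
    qed
    define dd where "dd j = length (takeWhile (\<lambda>l. l = ?F) (drop j c @ c))" for j
    define bb where "bb j = length (filter (\<lambda>l. l = ?B)
         (takeWhile (\<lambda>l. l \<noteq> ?F) (rev (take (Suc j) c) @ rev c)))" for j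
    define tt where "tt j = (if c ! j = ?F then 2 * n + dd j else bb j)" for j
    have D: "dd j = Suc (dd (sc n j))" if j: "j < n" "c ! j = ?F" for j
    proof (cases "j = n - 1")
      case True
      have s: "sc n j = 0" using True j by (simp add: sc_alt)
      have "drop j c = [c ! j]" using True j len
        by (metis Cons_nth_drop_Suc One_nat_def Suc_pred drop_all le_refl less_nat_zero_code
            not_gr_zero)
      then have "dd j = length (takeWhile (\<lambda>l. l = ?F) (c ! j # c))"
        by (simp add: dd_def)
      also have "\<dots> = Suc (length (takeWhile (\<lambda>l. l = ?F) c))" using j by simp
      also have "takeWhile (\<lambda>l. l = ?F) c = takeWhile (\<lambda>l. l = ?F) (drop 0 c @ c)"
      proof -
        obtain l where "l \<in> set c" "l \<noteq> ?F" using nF by blast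
        then show ?thesis using takeWhile_append1[of l c "\<lambda>l. l = ?F" c] by simp
      qed
      finally show ?thesis by (simp add: dd_def s)
    next
      case False
      have s: "sc n j = Suc j" using False j by (simp add: sc_alt)
      have "drop j c = c ! j # drop (Suc j) c" using j(1) len by (metis Cons_nth_drop_Suc)
      then show ?thesis using j by (simp add: dd_def s)
    qed
    have Bt: "bb (sc n j) = (if c ! (sc n j) = ?B then 1 else 0) + bb j"
      if j: "j < n" "c ! (sc n j) \<noteq> ?F" for j
    proof (cases "j = n - 1")
      case True
      have s: "sc n j = 0" using True j by (simp add: sc_alt)
      have t1: "take (Suc 0) c = [c ! 0]" using n len
        by (metis One_nat_def Suc_le_eq take0 take_Suc_conv_app_nth append_Nil)
      have t2: "take (Suc j) c = c" using True len by simp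
      have "bb (sc n j) = length (filter (\<lambda>l. l = ?B) (takeWhile (\<lambda>l. l \<noteq> ?F) (c ! 0 # rev c)))"
        by (simp add: bb_def s t1)
      also have "\<dots> = (if c ! 0 = ?B then 1 else 0) + length (filter (\<lambda>l. l = ?B) (takeWhile (\<lambda>l. l \<noteq> ?F) (rev c)))"
        using j s by simp
      also have "takeWhile (\<lambda>l. l \<noteq> ?F) (rev c) = takeWhile (\<lambda>l. l \<noteq> ?F) (rev (take (Suc j) c) @ rev c)"
        unfolding t2 using \<open>?F \<in> set c\<close> by (subst takeWhile_append1[of ?F]) auto
      finally show ?thesis by (simp add: bb_def s)
    next
      case False
      have s: "sc n j = Suc j" using False j by (simp add: sc_alt)
      have "take (Suc (Suc j)) c = take (Suc j) c @ [c ! Suc j]"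
        using j False len by (simp add: take_Suc_conv_app_nth)
      then show ?thesis using j by (simp add: bb_def s)
    qed
    have Bb: "bb j < 2 * n" if "j < n" for j
    proof -
      have "bb j \<le> length (takeWhile (\<lambda>l. l \<noteq> ?F) (rev (take (Suc j) c) @ rev c))"
        unfolding bb_def by (rule length_filter_le)
      also have "\<dots> \<le> length (rev (take (Suc j) c)) + length (takeWhile (\<lambda>l. l \<noteq> ?F) (rev c))"
        by (rule tw_app_le)
      also have "length (takeWhile (\<lambda>l. l \<noteq> ?F) (rev c)) < length (rev c)"
        by (rule tw_less) (use True in auto)
      finally show ?thesis using that len by simp
    qed
    have nth: "kap n tt ! j = c ! j" if j: "j < n" for j
    proof -
      have sj: "sc n j < n" "pr n j < n" "sc n (pr n j) = j" using j by (simp_all add: sc_lt pr_lt sc_pr)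
      have Q: "(tt (sc n j) < tt j) = (c ! j = ?F)"
      proof (cases "c ! j = ?F")
        case True
        show ?thesis
        proof (cases "c ! sc n j = ?F")
          case True2: True
          show ?thesis using D[OF j True] True True2 by (simp add: tt_def)
        next
          case False
          show ?thesis using Bb[OF sj(1)] True False by (simp add: tt_def)
        qed
      next
        case False
        show ?thesis
        proof (cases "c ! sc n j = ?F")
          case True2: True
          show ?thesis using Bb[OF j] False True2 by (simp add: tt_def)
        next
          case False2: False
          show ?thesis using Bt[OF j False2] False False2 by (simp add: tt_def)
        qed
      qed
      have P: "(tt (pr n j) < tt j \<and> \<not> tt (sc n j) < tt j) = (c ! j = ?B)"
      proof (cases "c ! j = ?F")
        case True
        then show ?thesis using Q by auto
      next
        case False
        show ?thesis
        proof (cases "c ! pr n j = ?F")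
          case True2: True
          have "c ! j \<noteq> ?B" using cyc[OF sj(2)] True2 sj(3) by auto
          then show ?thesis using Bb[OF j] False True2 by (simp add: tt_def)
        next
          case False2: False
          have "bb j = (if c ! j = ?B then 1 else 0) + bb (pr n j)"
            using Bt[OF sj(2)] sj(3) False by simp
          then show ?thesis using Q False False2 by (simp add: tt_def)
        qed
      qed
      have "kap n tt ! j = (tt (sc n j) < tt j, tt (pr n j) < tt j \<and> \<not> tt (sc n j) < tt j)"
        using j by (simp add: kap_def)
      also have "\<dots> = c ! j" using Q P cj[OF j] by simp
      finally show ?thesis .
    qed
    have "kap n tt = c"
      by (rule nth_equalityI) (use nth len in \<open>auto simp: kap_def\<close>)
    then show ?thesis by blast
  qed
qed

lemma range_kap: "1 \<le> n \<Longrightarrow> range (kap n) = KK n"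
  using kap_in kap_surj by blast



definition lin_ok :: "(bool \<times> bool) list \<Rightarrow> bool" where
  "lin_ok w = (\<forall>i. Suc i < length w \<longrightarrow> \<not> (fst (w!i) \<and> snd (w!Suc i)))"

definition Lin :: "nat \<Rightarrow> bool \<times> bool \<Rightarrow> bool \<times> bool \<Rightarrow> (bool \<times> bool) list set" where
  "Lin m a b = {w. length w = Suc m \<and> set w \<subseteq> Sg \<and> lin_ok w \<and> hd w = a \<and> last w = b}"

definition NN :: "nat \<Rightarrow> bool \<times> bool \<Rightarrow> bool \<times> bool \<Rightarrow> nat" where
  "NN m a b = card (Lin m a b)"

definition AS :: "nat \<Rightarrow> (bool \<times> bool) list set" where
  "AS n = {c. length c = n \<and> set c \<subseteq> Sg \<and> (\<forall>j<n. \<not> (fst (c!j) \<and> snd (c!(sc n j))))}"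

lemma finite_Sg: "finite Sg" by (simp add: Sg_def)

lemma finite_W: "finite {w. length w = k \<and> set w \<subseteq> Sg}"
  using finite_lists_length_eq[OF finite_Sg, of k] by (simp add: conj_commute)

lemma lin_snoc:
  assumes "w \<noteq> []"
  shows "lin_ok (w @ [b]) \<longleftrightarrow> lin_ok w \<and> \<not> (fst (last w) \<and> snd b)"
proof
  assume h: "lin_ok (w @ [b])"
  have "lin_ok w"
    unfolding lin_ok_def
  proof (intro allI impI)
    fix i assume i: "Suc i < length w"
    then show "\<not> (fst (w!i) \<and> snd (w!Suc i))"
      using h[unfolded lin_ok_def, rule_format, of i] by (simp add: nth_append)
  qed
  moreover have "\<not> (fst (last w) \<and> snd b)"
    using h[unfolded lin_ok_def, rule_format, of "length w - 1"] assms
    by (simp add: nth_append last_conv_nth)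
  ultimately show "lin_ok w \<and> \<not> (fst (last w) \<and> snd b)" by simp
next
  assume h: "lin_ok w \<and> \<not> (fst (last w) \<and> snd b)"
  show "lin_ok (w @ [b])"
    unfolding lin_ok_def
  proof (intro allI impI)
    fix i assume i: "Suc i < length (w @ [b])"
    show "\<not> (fst ((w @ [b])!i) \<and> snd ((w @ [b])!Suc i))"
    proof (cases "Suc i < length w")
      case True
      then show ?thesis using h[unfolded lin_ok_def] by (simp add: nth_append)
    next
      case False
      then have "i = length w - 1" using i by simp
      then show ?thesis using h assms by (simp add: nth_append last_conv_nth)
    qed
  qed
qed

lemma Lin_Suc:
  "Lin (Suc m) a b = (\<lambda>w. w @ [b]) ` {w. length w = Suc m \<and> set w \<subseteq> Sg \<and> lin_ok w \<and> hd w = a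
      \<and> \<not> (fst (last w) \<and> snd b) \<and> b \<in> Sg}" (is "?L = ?R")
proof
  show "?L \<subseteq> ?R"
  proof
    fix v assume v: "v \<in> Lin (Suc m) a b"
    have lv: "length v = Suc (Suc m)" and sv: "set v \<subseteq> Sg" and ov: "lin_ok v"
      and hv: "hd v = a" and tv: "last v = b" using v by (simp_all add: Lin_def)
    define w where "w = butlast v"
    have vn: "v \<noteq> []" using lv by auto
    have vw: "v = w @ [b]" unfolding w_def using append_butlast_last_id[OF vn] tv by simp
    have lw: "length w = Suc m" unfolding w_def using lv by simp
    have wn: "w \<noteq> []" using lw by auto
    have sw: "set w \<subseteq> Sg" using sv vw by simp
    have bS: "b \<in> Sg" using sv vw by simp
    have hw: "hd w = a" using hv vw wn by simp
    have ow: "lin_ok w \<and> \<not> (fst (last w) \<and> snd b)" using ov vw lin_snoc[OF wn, of b] by simp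
    show "v \<in> ?R" unfolding vw using lw sw hw ow bS by blast
  qed
next
  show "?R \<subseteq> ?L"
  proof
    fix v assume "v \<in> ?R"
    then obtain w where w: "v = w @ [b]" "length w = Suc m" "set w \<subseteq> Sg" "lin_ok w" "hd w = a"
      "\<not> (fst (last w) \<and> snd b)" "b \<in> Sg" by blast
    have wn: "w \<noteq> []" using w by auto
    have "lin_ok v" using w(1,4,6) lin_snoc[OF wn, of b] by simp
    moreover have "hd v = a" using w(1,5) wn by simp
    moreover have "last v = b" using w(1) by simp
    moreover have "set v \<subseteq> Sg" using w(1,3,7) by simp
    moreover have "length v = Suc (Suc m)" using w(1,2) by simp
    ultimately show "v \<in> ?L" by (simp add: Lin_def)
  qed
qed

lemma card_group:
  assumes "finite A" "finite B" "g ` A \<subseteq> B"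
  shows "card A = (\<Sum>y\<in>B. card {x\<in>A. g x = y})"
proof -
  have "(\<Sum>y\<in>B. \<Sum>x\<in>{x \<in> A. g x = y}. (1::nat)) = (\<Sum>x\<in>A. 1)" by (rule sum.group[OF assms])
  then show ?thesis by simp
qed

lemma NN_Suc:
  assumes "b \<in> Sg"
  shows "NN (Suc m) a b = (\<Sum>b'\<in>Sg. if fst b' \<and> snd b then 0 else NN m a b')"
proof -
  define S where "S = {w. length w = Suc m \<and> set w \<subseteq> Sg \<and> lin_ok w \<and> hd w = a
      \<and> \<not> (fst (last w) \<and> snd b) \<and> b \<in> Sg}"
  have fS: "finite S" by (rule finite_subset[OF _ finite_W[of "Suc m"]]) (auto simp: S_def)
  have "NN (Suc m) a b = card S"
    unfolding NN_def Lin_Suc S_def[symmetric] by (rule card_image) (simp add: inj_on_def)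
  also have "\<dots> = (\<Sum>b'\<in>Sg. card {w\<in>S. last w = b'})"
  proof (rule card_group[OF fS finite_Sg])
    show "last ` S \<subseteq> Sg"
    proof
      fix l assume "l \<in> last ` S"
      then obtain w where "w \<in> S" "l = last w" by auto
      moreover have "w \<noteq> []" "set w \<subseteq> Sg" using \<open>w \<in> S\<close> by (auto simp: S_def)
      ultimately show "l \<in> Sg" using last_in_set[of w] by auto
    qed
  qed
  also have "\<dots> = (\<Sum>b'\<in>Sg. if fst b' \<and> snd b then 0 else NN m a b')"
  proof (rule sum.cong[OF refl])
    fix b' assume "b' \<in> Sg"
    show "card {w\<in>S. last w = b'} = (if fst b' \<and> snd b then 0 else NN m a b')"
    proof (cases "fst b' \<and> snd b")
      case True
      then have E: "{w\<in>S. last w = b'} = {}" by (auto simp: S_def)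
      show ?thesis using True by (simp only: E card.empty) simp
    next
      case False
      then have E: "{w\<in>S. last w = b'} = Lin m a b'" using assms by (auto simp: S_def Lin_def)
      show ?thesis unfolding if_not_P[OF False] NN_def E ..
    qed
  qed
  finally show ?thesis .
qed

lemma NN_0:
  assumes "a \<in> Sg"
  shows "NN 0 a b = (if a = b then 1 else 0)"
proof -
  have "Lin 0 a b = (if a = b then {[a]} else {})"
    using assms by (auto simp: Lin_def lin_ok_def length_Suc_conv)
  then show ?thesis by (simp add: NN_def)
qed

lemma cyc_iff:
  assumes "length w = Suc m"
  shows "(\<forall>j<Suc m. \<not> (fst (w!j) \<and> snd (w!(sc (Suc m) j)))) \<longleftrightarrow>
     lin_ok w \<and> \<not> (fst (last w) \<and> snd (hd w))"
proof -
  have sc1: "sc (Suc m) j = (if j = m then 0 else Suc j)" if "j < Suc m" for j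
    using that by (simp add: sc_alt)
  have wn: "w \<noteq> []" using assms by auto
  have l: "last w = w ! m" using assms wn by (simp add: last_conv_nth)
  have h: "hd w = w ! 0" using assms wn by (simp add: hd_conv_nth)
  show ?thesis
  proof
    assume H: "\<forall>j<Suc m. \<not> (fst (w!j) \<and> snd (w!(sc (Suc m) j)))"
    have "lin_ok w" unfolding lin_ok_def
    proof (intro allI impI)
      fix i assume "Suc i < length w"
      then show "\<not> (fst (w!i) \<and> snd (w!Suc i))" using H[rule_format, of i] sc1[of i] assms by simp
    qed
    moreover have "\<not> (fst (last w) \<and> snd (hd w))" using H[rule_format, of m] sc1[of m] l h by simp
    ultimately show "lin_ok w \<and> \<not> (fst (last w) \<and> snd (hd w))" by simp
  next
    assume H: "lin_ok w \<and> \<not> (fst (last w) \<and> snd (hd w))"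
    show "\<forall>j<Suc m. \<not> (fst (w!j) \<and> snd (w!(sc (Suc m) j)))"
    proof (intro allI impI)
      fix j assume j: "j < Suc m"
      show "\<not> (fst (w!j) \<and> snd (w!(sc (Suc m) j)))"
      proof (cases "j = m")
        case True then show ?thesis using H l h sc1[OF j] by simp
      next
        case False then show ?thesis using H sc1[OF j] j assms by (simp add: lin_ok_def)
      qed
    qed
  qed
qed

lemma AS_Suc:
  "card (AS (Suc m)) = (\<Sum>a\<in>Sg. \<Sum>b\<in>Sg. if fst b \<and> snd a then 0 else NN m a b)"
proof -
  have A: "AS (Suc m) = {w. length w = Suc m \<and> set w \<subseteq> Sg \<and> lin_ok w \<and> \<not> (fst (last w) \<and> snd (hd w))}"
    unfolding AS_def using cyc_iff by auto
  have fA: "finite (AS (Suc m))" by (rule finite_subset[OF _ finite_W[of "Suc m"]]) (auto simp: AS_def)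
  have "card (AS (Suc m)) = (\<Sum>y\<in>Sg \<times> Sg. card {w\<in>AS (Suc m). (hd w, last w) = y})"
  proof (rule card_group[OF fA])
    show "finite (Sg \<times> Sg)" using finite_Sg by simp
    show "(\<lambda>w. (hd w, last w)) ` AS (Suc m) \<subseteq> Sg \<times> Sg"
    proof
      fix y assume "y \<in> (\<lambda>w. (hd w, last w)) ` AS (Suc m)"
      then obtain w where w: "w \<in> AS (Suc m)" "y = (hd w, last w)" by auto
      then have "w \<noteq> []" "set w \<subseteq> Sg" by (auto simp: AS_def)
      then show "y \<in> Sg \<times> Sg" using w(2) by auto
    qed
  qed
  also have "\<dots> = (\<Sum>(a,b)\<in>Sg \<times> Sg. if fst b \<and> snd a then 0 else NN m a b)"
  proof (rule sum.cong[OF refl])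
    fix y assume "y \<in> Sg \<times> Sg"
    obtain a b where y: "y = (a, b)" by (cases y) auto
    show "card {w\<in>AS (Suc m). (hd w, last w) = y} = (case y of (a,b) \<Rightarrow> if fst b \<and> snd a then 0 else NN m a b)"
    proof (cases "fst b \<and> snd a")
      case True
      then have E: "{w\<in>AS (Suc m). (hd w, last w) = (a, b)} = {}" unfolding A by auto
      show ?thesis using True unfolding y by (simp only: E card.empty) simp
    next
      case False
      then have E: "{w\<in>AS (Suc m). (hd w, last w) = (a, b)} = Lin m a b" unfolding A Lin_def by auto
      show ?thesis unfolding y prod.case if_not_P[OF False] NN_def E ..
    qed
  qed
  also have "\<dots> = (\<Sum>a\<in>Sg. \<Sum>b\<in>Sg. if fst b \<and> snd a then 0 else NN m a b)"
    by (rule sum.cartesian_product[symmetric])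
  finally show ?thesis .
qed



lemma sum_Sg: "(\<Sum>b\<in>Sg. f b) = f (True,False) + f (False,True) + (f (False,False) :: nat)"
  by (simp add: Sg_def add.assoc)

lemma Sg_mem: "(True,False) \<in> Sg" "(False,True) \<in> Sg" "(False,False) \<in> Sg"
  by (auto simp: Sg_def)

lemma NN_SucF: "NN (Suc m) a (True,False) = NN m a (True,False) + NN m a (False,True) + NN m a (False,False)"
  using NN_Suc[OF Sg_mem(1)] by (simp add: sum_Sg)
lemma NN_SucB: "NN (Suc m) a (False,True) = NN m a (False,True) + NN m a (False,False)"
  using NN_Suc[OF Sg_mem(2)] by (simp add: sum_Sg)
lemma NN_SucE: "NN (Suc m) a (False,False) = NN m a (True,False) + NN m a (False,True) + NN m a (False,False)"
  using NN_Suc[OF Sg_mem(3)] by (simp add: sum_Sg)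

lemma AS_Suc':
  "card (AS (Suc m)) = (NN m (True,False) (True,False) + NN m (True,False) (False,True) + NN m (True,False) (False,False))
     + (NN m (False,True) (False,True) + NN m (False,True) (False,False))
     + (NN m (False,False) (True,False) + NN m (False,False) (False,True) + NN m (False,False) (False,False))"
  unfolding AS_Suc by (simp add: sum_Sg)

lemma NN0s:
  "NN 0 (True,False) (True,False) = 1" "NN 0 (True,False) (False,True) = 0" "NN 0 (True,False) (False,False) = 0"
  "NN 0 (False,True) (True,False) = 0" "NN 0 (False,True) (False,True) = 1" "NN 0 (False,True) (False,False) = 0"
  "NN 0 (False,False) (True,False) = 0" "NN 0 (False,False) (False,True) = 0" "NN 0 (False,False) (False,False) = 1"
  by (simp_all add: NN_0 Sg_mem)

definition SS :: "nat \<Rightarrow> bool \<times> bool \<Rightarrow> nat" where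
  "SS k a = NN k a (True,False) + NN k a (False,True) + NN k a (False,False)"
definition YS :: "nat \<Rightarrow> bool \<times> bool \<Rightarrow> nat" where
  "YS k a = NN k a (False,True) + NN k a (False,False)"

lemma SS_Suc: "SS (Suc k) a = 2 * SS k a + YS k a"
  unfolding SS_def YS_def NN_SucF NN_SucB NN_SucE by simp

lemma YS_Suc: "YS (Suc k) a = YS k a + SS k a"
  unfolding SS_def YS_def NN_SucF NN_SucB NN_SucE by simp

lemma AS_Suc'': "card (AS (Suc k)) = SS k (True,False) + SS k (False,False) + YS k (False,True)"
  unfolding AS_Suc' SS_def YS_def by simp

lemma SS_rec: "SS (Suc (Suc k)) a + SS k a = 3 * SS (Suc k) a"
  using SS_Suc[of "Suc k" a] SS_Suc[of k a] YS_Suc[of k a] by linarith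

lemma YS_rec: "YS (Suc (Suc k)) a + YS k a = 3 * YS (Suc k) a"
  using YS_Suc[of "Suc k" a] SS_Suc[of k a] YS_Suc[of k a] by linarith

lemma AS_rec: "card (AS (k + 3)) + card (AS (k + 1)) = 3 * card (AS (k + 2))"
proof -
  have e: "k + 3 = Suc (Suc (Suc k))" "k + 2 = Suc (Suc k)" "k + 1 = Suc k" by simp_all
  show ?thesis unfolding e AS_Suc''
    using SS_rec[of k "(True,False)"] SS_rec[of k "(False,False)"] YS_rec[of k "(False,True)"]
    by (simp only: distrib_left)
qed

lemma SY0: "SS 0 (True,False) = 1" "SS 0 (False,False) = 1" "SS 0 (False,True) = 1"
  "YS 0 (True,False) = 0" "YS 0 (False,False) = 1" "YS 0 (False,True) = 1"
  unfolding SS_def YS_def NN0s by simp_all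

lemma AS_1: "card (AS 1) = 3"
proof -
  have e: "(1::nat) = Suc 0" by simp
  show ?thesis unfolding e AS_Suc'' SY0 by simp
qed

lemma AS_2: "card (AS 2) = 7"
proof -
  have e: "(2::nat) = Suc (Suc 0)" by simp
  show ?thesis unfolding e AS_Suc'' SS_Suc YS_Suc SY0 by simp
qed

definition Lam :: "nat \<Rightarrow> real" where
  "Lam n = golden ^ (2 * n) + inverse golden ^ (2 * n)"

lemma golden_gg: "golden * golden = golden + 1"
proof -
  have s: "sqrt 5 * sqrt 5 = (5::real)" by simp
  have "golden * golden = (1 + 2 * sqrt 5 + sqrt 5 * sqrt 5) / 4" unfolding golden_def
    by (simp add: field_simps)
  also have "\<dots> = golden + 1" unfolding s golden_def by (simp add: field_simps)
  finally show ?thesis .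
qed

lemma golden_inv: "inverse golden = golden - 1"
proof -
  have "0 \<le> sqrt (5::real)" by simp
  then have "0 < 1 + sqrt (5::real)" by linarith
  then have "golden > 0" unfolding golden_def by simp
  then have "golden \<noteq> 0" by simp
  moreover have "golden * (golden - 1) = 1" using golden_gg by (simp add: algebra_simps)
  ultimately show ?thesis by (metis inverse_unique)
qed

lemma Lam_qr: "\<exists>q r. (\<forall>k. Lam k = q ^ k + r ^ k) \<and> q + r = 3 \<and> q * r = 1"
proof -
  define q where "q = golden * golden"
  define r where "r = inverse golden * inverse golden"
  have qg: "q = golden + 1" unfolding q_def by (rule golden_gg)
  have "r = (golden - 1) * (golden - 1)" unfolding r_def golden_inv ..
  also have "\<dots> = golden * golden - 2 * golden + 1" by (simp add: algebra_simps)
  finally have rg: "r = 2 - golden" using golden_gg by simp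
  have s: "q + r = 3" using qg rg by simp
  have p: "q * r = 1"
  proof -
    have "q * r = (golden + 1) * (2 - golden)" using qg rg by simp
    also have "\<dots> = 2 + golden - golden * golden" by (simp add: algebra_simps)
    finally show ?thesis using golden_gg by simp
  qed
  have L: "Lam k = q ^ k + r ^ k" for k
    unfolding Lam_def q_def r_def by (simp add: power_mult power2_eq_square power_mult_distrib)
  show ?thesis using L s p by blast
qed

lemma Lam_rec: "Lam (n + 2) = 3 * Lam (n + 1) - Lam n"
proof -
  obtain q r where L: "\<And>k. Lam k = q ^ k + r ^ k" and s: "q + r = 3" and p: "q * r = 1"
    using Lam_qr by blast
  have q2: "q * q = 3 * q - 1"
  proof -
    have "3 - r = q" using s by simp
    then have "q * q = q * (3 - r)" by simp
    then show ?thesis using p by (simp add: algebra_simps)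
  qed
  have r2: "r * r = 3 * r - 1"
  proof -
    have "3 - q = r" using s by simp
    then have "r * r = r * (3 - q)" by simp
    then show ?thesis using p by (simp add: algebra_simps)
  qed
  have "Lam (n + 2) = q ^ n * (q * q) + r ^ n * (r * r)" unfolding L by (simp add: power_add power2_eq_square)
  also have "\<dots> = 3 * (q ^ n * q + r ^ n * r) - (q ^ n + r ^ n)" unfolding q2 r2 by (simp add: algebra_simps)
  also have "\<dots> = 3 * Lam (n + 1) - Lam n" unfolding L by (simp add: algebra_simps)
  finally show ?thesis .
qed

lemma Lam_01: "Lam 0 = 2" "Lam 1 = 3"
proof -
  obtain q r where L: "\<And>k. Lam k = q ^ k + r ^ k" and s: "q + r = 3"
    using Lam_qr by blast
  show "Lam 0 = 2" "Lam 1 = 3" unfolding L using s by simp_all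
qed

lemma Lam_2: "Lam 2 = 7"
proof -
  have "Lam 2 = 3 * Lam 1 - Lam 0" using Lam_rec[of 0] by (simp only: add_0)
  then show ?thesis unfolding Lam_01 by simp
qed

lemma Lam_3: "Lam 3 = 18"
proof -
  have e: "(1::nat) + 2 = 3" "(1::nat) + 1 = 2" by simp_all
  have "Lam 3 = 3 * Lam 2 - Lam 1" using Lam_rec[of 1] unfolding e .
  then show ?thesis unfolding Lam_01 Lam_2 by simp
qed



lemma AS_Lam: "1 \<le> n \<Longrightarrow> real (card (AS n)) = Lam n"
proof (induction n rule: less_induct)
  case (less n)
  have "n = 1 \<or> n = 2 \<or> (\<exists>k. n = k + 3)"
  proof (cases "3 \<le> n")
    case True
    then have "n = (n - 3) + 3" by simp
    then show ?thesis by blast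
  next
    case False
    then show ?thesis using less.prems by linarith
  qed
  then consider "n = 1" | "n = 2" | k where "n = k + 3" by blast
  then show ?case
  proof cases
    case 1 then show ?thesis using AS_1 Lam_01 by simp
  next
    case 2 then show ?thesis using AS_2 Lam_2 by simp
  next
    case 3
    have a: "real (card (AS (k + 2))) = Lam (k + 2)" using less.IH[of "k + 2"] 3 by simp
    have b: "real (card (AS (k + 1))) = Lam (k + 1)" using less.IH[of "k + 1"] 3 by simp
    have c: "real (card (AS (k + 3))) + real (card (AS (k + 1))) = 3 * real (card (AS (k + 2)))"
      using AS_rec[of k] by (metis of_nat_add of_nat_mult of_nat_numeral)
    have d: "Lam (k + 3) = 3 * Lam (k + 2) - Lam (k + 1)"
    proof -
      have e: "k + 1 + 2 = k + 3" "k + 1 + 1 = k + 2" by simp_all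
      show ?thesis using Lam_rec[of "k + 1"] unfolding e .
    qed
    show ?thesis using a b c d 3 by simp
  qed
qed

lemma KK_AS:
  assumes "1 \<le> n"
  shows "card (KK n) + 2 ^ n = card (AS n)"
proof -
  let ?F = "(True,False)" and ?B = "(False,True)" and ?E = "(False,False)"
  define BS where "BS = {c. set c \<subseteq> {?B, ?E} \<and> length c = n} - {replicate n ?E}"
  have fW: "finite {c. set c \<subseteq> {?B, ?E} \<and> length c = n}" by (rule finite_lists_length_eq) simp
  have cW: "card {c. set c \<subseteq> {?B, ?E} \<and> length c = n} = 2 ^ n"
    by (simp add: card_lists_length_eq numeral_2_eq_2)
  have cBS: "card BS = 2 ^ n - 1" unfolding BS_def
    by (subst card_Diff_singleton) (use fW cW in auto)
  have fBS: "finite BS" using fW by (simp add: BS_def)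
  have fA: "finite (AS n)" by (rule finite_subset[OF _ finite_W[of n]]) (auto simp: AS_def)
  have AS_split: "AS n = KK n \<union> ({replicate n ?F} \<union> BS)"
  proof
    show "AS n \<subseteq> KK n \<union> ({replicate n ?F} \<union> BS)"
    proof
      fix c assume c: "c \<in> AS n"
      show "c \<in> KK n \<union> ({replicate n ?F} \<union> BS)"
      proof (cases "c \<in> KK n")
        case True then show ?thesis by simp
      next
        case False
        then have "c = replicate n ?F \<or> (?F \<notin> set c \<and> ?B \<in> set c)"
          using c by (auto simp: AS_def KK_def)
        moreover have "c \<in> BS" if "?F \<notin> set c" "?B \<in> set c"
        proof -
          have "set c \<subseteq> {?B, ?E}" using c that(1) by (auto simp: AS_def Sg_def)
          moreover have "c \<noteq> replicate n ?E" using that(2) by auto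
          ultimately show ?thesis using c by (auto simp: BS_def AS_def)
        qed
        ultimately show ?thesis by auto
      qed
    qed
  next
    show "KK n \<union> ({replicate n ?F} \<union> BS) \<subseteq> AS n"
    proof -
      have "KK n \<subseteq> AS n" by (auto simp: KK_def AS_def)
      moreover have "replicate n ?F \<in> AS n"
        by (auto simp: AS_def Sg_def sc_lt)
      moreover have "BS \<subseteq> AS n"
      proof
        fix c assume "c \<in> BS"
        then have c: "set c \<subseteq> {?B, ?E}" "length c = n" by (auto simp: BS_def)
        have "\<not> fst (c ! j)" if "j < n" for j
        proof -
          have "c ! j \<in> set c" using that c by simp
          then show ?thesis using c by auto
        qed
        then show "c \<in> AS n" using c by (auto simp: AS_def Sg_def)
      qed
      ultimately show ?thesis by auto
    qed
  qed
  have d1: "KK n \<inter> ({replicate n ?F} \<union> BS) = {}"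
  proof -
    have "replicate n ?F \<notin> KK n" by (simp add: KK_def)
    moreover have "c \<notin> KK n" if "c \<in> BS" for c
    proof -
      have c: "set c \<subseteq> {?B, ?E}" "length c = n" "c \<noteq> replicate n ?E" using that by (auto simp: BS_def)
      have "?B \<in> set c"
      proof (rule ccontr)
        assume "?B \<notin> set c"
        then have "\<forall>y\<in>set c. y = ?E" using c by auto
        then have "replicate (length c) ?E = c" by (rule replicate_length_same)
        then show False using c by simp
      qed
      moreover have "?F \<notin> set c" using c by auto
      ultimately show ?thesis by (auto simp: KK_def)
    qed
    ultimately show ?thesis by auto
  qed
  have d2: "replicate n ?F \<notin> BS"
  proof
    assume "replicate n ?F \<in> BS"
    then have "set (replicate n ?F) \<subseteq> {?B, ?E}" unfolding BS_def by blast
    moreover have "set (replicate n ?F) = {?F}" using assms by simp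
    ultimately show False by simp
  qed
  have fK: "finite (KK n)" using fA AS_split by simp
  have "card (AS n) = card (KK n) + card ({replicate n ?F} \<union> BS)"
    unfolding AS_split by (rule card_Un_disjoint) (use fK fBS d1 in auto)
  also have "card ({replicate n ?F} \<union> BS) = 1 + card BS"
    using d2 fBS by simp
  also have "1 + card BS = 2 ^ n" using cBS by simp
  finally show ?thesis by simp
qed

lemma card_range_eq:
  assumes "\<And>a b. f a = f b \<longleftrightarrow> g a = g b"
  shows "card (range f) = card (range g)"
proof -
  define h where "h y = f (SOME a. g a = y)" for y
  have hg: "h (g a) = f a" for a
  proof -
    have "g (SOME b. g b = g a) = g a" by (rule someI) simp
    then show ?thesis unfolding h_def using assms by blast
  qed
  have "h \<circ> g = f" using hg by auto
  then have "range f = h ` range g" by (metis image_comp)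
  moreover have "inj_on h (range g)"
    by (auto simp: inj_on_def hg assms)
  ultimately show ?thesis by (simp add: card_image)
qed

theorem mainTheorem6:
  fixes n :: nat
  assumes "n \<ge> 5"
  shows "sensitivity n =
    (golden ^ (2 * n) + inverse golden ^ (2 * n) - 2 ^ n) / (3 ^ n - 2 ^ (n + 1) + 2)"
proof -
  have "card (dyn_set n) = card (range (kap n))"
    unfolding dyn_set_eq by (rule card_range_eq) (rule DD_eq_iff[OF assms])
  also have "\<dots> = card (KK n)" using range_kap[of n] assms by simp
  finally have c: "card (dyn_set n) = card (KK n)" .
  have "real (card (KK n)) + 2 ^ n = Lam n"
  proof -
    have n1: "1 \<le> n" using assms by simp
    have "real (card (KK n) + 2 ^ n) = Lam n" using KK_AS[OF n1] AS_Lam[OF n1] by simp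
    then show ?thesis by simp
  qed
  then have "real (card (dyn_set n)) = golden ^ (2 * n) + inverse golden ^ (2 * n) - 2 ^ n"
    using c by (simp add: Lam_def)
  then show ?thesis unfolding sensitivity_def by simp
qed

end
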